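(* Let $a$ be an integer, let $n$ be a positive odd integer, and let $q\neq 1$ be a positive real number. Define the $n\times n$ matrices $$A=\left[q^{\lfloor\frac{aj-(a+1)k}{n}\rfloor}\right]_{1\leqslant j,k\leqslant n},\qquad A'=\left[q^{\lceil\frac{(a+1)j-ak}{n}\rceil}\right]_{1\leqslant j,k\leqslant n}.$$ If $\gcd(a(a+1),n)>1$, then $$\operatorname{rank}(A)\leqslant\frac n3\quad\text{and}\quad \operatorname{rank}(A')\leqslant\frac n3.$$
   Context: $\lfloor x\rfloor$ is the largest integer not exceeding $x$ and $\lceil x\rceil$ is the least integer not smaller than $x$. *)

theory Defs
  imports "Jordan_Normal_Form.DL_Rank"
begin

(* Matrices use 0-based indices in Jordan_Normal_Form; entry (j,k) here
   corresponds to the paper's entry (j+1,k+1). *)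
definition matA :: "int \<Rightarrow> nat \<Rightarrow> real \<Rightarrow> real mat" where
  "matA a n q = mat n n (\<lambda>(j,k). q powr real_of_int
      \<lfloor>(real_of_int (a * int (j+1) - (a+1) * int (k+1))) / real n\<rfloor>)"

definition matA' :: "int \<Rightarrow> nat \<Rightarrow> real \<Rightarrow> real mat" where
  "matA' a n q = mat n n (\<lambda>(j,k). q powr real_of_int
      \<lceil>(real_of_int ((a+1) * int (j+1) - a * int (k+1))) / real n\<rceil>)"

end

theory Submission imports Defs begin

lemma (in vec_space) span_sum_mem:
  fixes f g :: "'b \<Rightarrow> nat \<Rightarrow> 'a"
  assumes "finite D" "D \<subseteq> C"
  shows "vec n (\<lambda>r. \<Sum>i\<in>D. f i r * g i c) \<in> span ((\<lambda>i. vec n (f i)) ` C)"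
  using assms
proof (induction D rule: finite_induct)
  case empty
  have sub: "submodule class_ring (span ((\<lambda>i. vec n (f i)) ` C)) V"
    by (rule span_is_submodule) auto
  have "vec n (\<lambda>r. \<Sum>i\<in>{}. f i r * g i c) = zero V" by (simp add: zero_vec_def)
  moreover have "zero V \<in> span ((\<lambda>i. vec n (f i)) ` C)"
    using submodule.zero_closed[OF sub] by simp
  ultimately show ?case by simp
next
  case (insert x F)
  have sub: "submodule class_ring (span ((\<lambda>i. vec n (f i)) ` C)) V"
    by (rule span_is_submodule) auto
  have e: "vec n (\<lambda>r. \<Sum>i\<in>insert x F. f i r * g i c) = g x c \<cdot>\<^sub>v vec n (f x) + vec n (\<lambda>r. \<Sum>i\<in>F. f i r * g i c)"
    using insert(1,2) by (intro eq_vecI) (simp_all add: mult.commute)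
  have m1: "vec n (f x) \<in> span ((\<lambda>i. vec n (f i)) ` C)"
    using insert(4) by (intro span_mem) auto
  have "g x c \<cdot>\<^sub>v vec n (f x) + vec n (\<lambda>r. \<Sum>i\<in>F. f i r * g i c) \<in> span ((\<lambda>i. vec n (f i)) ` C)"
    using submodule.m_closed[OF sub] submodule.smult_closed[OF sub] m1 insert(3,4) by (simp add: class_ring_simps)
  then show ?case using e by simp
qed


lemma (in vec_space) rank_le_card_sum_products:
  fixes f g :: "'b \<Rightarrow> nat \<Rightarrow> 'a"
  assumes A: "A \<in> carrier_mat n nc" and fin: "finite C"
    and ent: "\<And>r c. r < n \<Longrightarrow> c < nc \<Longrightarrow> A $$ (r,c) = (\<Sum>i\<in>C. f i r * g i c)"
  shows "rank A \<le> card C"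
proof -
  define S where "S = (\<lambda>i. vec n (f i)) ` C"
  have Sc: "S \<subseteq> carrier_vec n" unfolding S_def by auto
  have ScV: "S \<subseteq> carrier V" using Sc by simp
  have Sf: "finite S" unfolding S_def using fin by auto
  have cols: "set (cols A) \<subseteq> span S"
  proof
    fix v assume "v \<in> set (cols A)"
    then obtain c where c: "c < dim_col A" "v = col A c" by (metis cols_length cols_nth in_set_conv_nth)
    have "v = vec n (\<lambda>r. \<Sum>i\<in>C. f i r * g i c)"
      unfolding c(2) using c(1) A by (intro eq_vecI) (simp_all add: ent)
    then show "v \<in> span S" unfolding S_def using span_sum_mem[OF fin, of C f g c] by simp
  qed
  have vs: "vectorspace class_ring (vs (span S))" using span_is_subspace[THEN subspace_is_vs, OF Sc] .
  have sub: "submodule class_ring (span S) V" using Sc by (simp add: span_is_submodule)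
  have sub2: "subspace class_ring (span (set (cols A))) (vs (span S))"
    using vectorspace.span_is_subspace[OF vs, of "set (cols A)", unfolded
      span_li_not_depend(1)[OF cols sub]] cols by auto
  have fin_dim: "vectorspace.fin_dim class_ring (vs (span S))"
       "vectorspace.fin_dim class_ring (vs (span S)\<lparr>carrier := span (set (cols A))\<rparr>)"
    using fin_dim_span fin_dim_span_cols A Sc Sf by auto
  have "S \<subseteq> span S" using in_own_span[OF Sc] .
  have "vectorspace.dim class_ring (vs (span S)) \<le> card S"
    apply (rule vectorspace.gen_ge_dim[OF vs Sf])
    using \<open>S \<subseteq> span S\<close> span_li_not_depend(1)[OF \<open>S \<subseteq> span S\<close> sub] by auto
  also have "card S \<le> card C" unfolding S_def using fin card_image_le by blast
  finally have d: "vectorspace.dim class_ring (vs (span S)) \<le> card C" .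
  show ?thesis unfolding rank_def using vectorspace.subspace_dim[OF vs sub2 fin_dim(1) fin_dim(2)] d by simp
qed


lemma rank_rows:
  fixes M :: "real mat" and K :: "nat \<Rightarrow> 'b"
  assumes "M \<in> carrier_mat n n"
    and "\<And>j k. j < n \<Longrightarrow> k < n \<Longrightarrow> M $$ (j,k) = \<phi> j * \<psi> (K j) k"
  shows "vec_space.rank n M \<le> card (K ` {0..<n})"
proof (rule vec_space.rank_le_card_sum_products[OF assms(1), of _ "\<lambda>c j. if K j = c then \<phi> j else 0" "\<lambda>c k. \<psi> c k"])
  show "finite (K ` {0..<n})" by simp
  fix r c assume "r < n" "c < n"
  then show "M $$ (r, c) = (\<Sum>i\<in>K ` {0..<n}. (if K r = i then \<phi> r else 0) * \<psi> i c)"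
  proof -
    have "(\<Sum>i\<in>K ` {0..<n}. (if K r = i then \<phi> r else 0) * \<psi> i c) = (\<Sum>i\<in>K ` {0..<n}. if K r = i then \<phi> r * \<psi> i c else 0)"
      by (rule sum.cong) auto
    also have "\<dots> = \<phi> r * \<psi> (K r) c" using \<open>r < n\<close> by (simp add: sum.delta')
    finally show ?thesis using assms(2) \<open>r < n\<close> \<open>c < n\<close> by simp
  qed
qed

lemma rank_cols:
  fixes M :: "real mat" and K :: "nat \<Rightarrow> 'b"
  assumes "M \<in> carrier_mat n n"
    and "\<And>j k. j < n \<Longrightarrow> k < n \<Longrightarrow> M $$ (j,k) = \<psi> j (K k) * \<phi> k"
  shows "vec_space.rank n M \<le> card (K ` {0..<n})"
proof (rule vec_space.rank_le_card_sum_products[OF assms(1), of _ "\<lambda>c j. \<psi> j c" "\<lambda>c k. if K k = c then \<phi> k else 0"])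
  show "finite (K ` {0..<n})" by simp
  fix r c assume "r < n" "c < n"
  then show "M $$ (r, c) = (\<Sum>i\<in>K ` {0..<n}. \<psi> r i * (if K c = i then \<phi> c else 0))"
  proof -
    have "(\<Sum>i\<in>K ` {0..<n}. \<psi> r i * (if K c = i then \<phi> c else 0)) = (\<Sum>i\<in>K ` {0..<n}. if K c = i then \<psi> r i * \<phi> c else 0)"
      by (rule sum.cong) auto
    also have "\<dots> = \<psi> r (K c) * \<phi> c" using \<open>c < n\<close> by (simp add: sum.delta')
    finally show ?thesis using assms(2) \<open>r < n\<close> \<open>c < n\<close> by simp
  qed
qed

lemma card_mod_classes:
  fixes b N :: int
  assumes N: "N > 0" and g: "g = gcd b N"
  shows "card ((\<lambda>j. (b * int (j+1)) mod N) ` {0..<n}) \<le> nat (N div g)"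
proof -
  have gpos: "g > 0" using g N by simp
  have sub: "(\<lambda>j. (b * int (j+1)) mod N) ` {0..<n} \<subseteq> (\<lambda>i. g * i) ` {0..<N div g}"
  proof
    fix x assume "x \<in> (\<lambda>j. (b * int (j+1)) mod N) ` {0..<n}"
    then obtain j where x: "x = (b * int (j+1)) mod N" by auto
    have "g dvd x" unfolding x g by (simp add: dvd_mod)
    then obtain i where i: "x = g * i" by auto
    obtain M where M: "N = g * M" using g by (metis gcd_dvd2 dvdE)
    have "0 \<le> x" "x < N" using x N by auto
    then have "0 \<le> i" "i < M" using i M gpos
      by (simp_all add: zero_le_mult_iff mult_less_cancel_left)
    moreover have "N div g = M" using M gpos by simp
    ultimately show "x \<in> (\<lambda>i. g * i) ` {0..<N div g}" using i by auto
  qed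
  have "card ((\<lambda>j. (b * int (j+1)) mod N) ` {0..<n}) \<le> card ((\<lambda>i. g * i) ` {0..<N div g})"
    by (rule card_mono[OF _ sub]) simp
  also have "\<dots> \<le> card {0..<N div g}" by (rule card_image_le) simp
  finally show ?thesis by simp
qed

lemma bound3:
  fixes b N :: int
  assumes N: "N > 0" "odd N" and g: "gcd b N > 1"
  shows "real (card ((\<lambda>j. (b * int (j+1)) mod N) ` {0..<n})) \<le> real_of_int N / 3"
proof -
  let ?g = "gcd b N"
  have "?g dvd N" by simp
  then have "odd ?g" using N(2) by (metis dvd_trans)
  then have g3: "?g \<ge> 3" using g by presburger
  have "?g * (N div ?g) = N" by simp
  have d0: "N div ?g \<ge> 0" using N(1) g3 by (simp add: pos_imp_zdiv_nonneg_iff)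
  have "3 * (N div ?g) \<le> ?g * (N div ?g)" by (rule mult_right_mono[OF g3 d0])
  then have "3 * (N div ?g) \<le> N" using \<open>?g * (N div ?g) = N\<close> by simp
  then have r: "real_of_int (N div ?g) \<le> real_of_int N / 3" by linarith
  have "card ((\<lambda>j. (b * int (j+1)) mod N) ` {0..<n}) \<le> nat (N div ?g)"
    by (rule card_mod_classes[OF N(1) refl])
  then have "real (card ((\<lambda>j. (b * int (j+1)) mod N) ` {0..<n})) \<le> real (nat (N div ?g))"
    by (simp only: of_nat_le_iff)
  also have "real (nat (N div ?g)) = real_of_int (N div ?g)" using d0 by simp
  finally have "real (card ((\<lambda>j. (b * int (j+1)) mod N) ` {0..<n})) \<le> real_of_int (N div ?g)" .
  with r show ?thesis by linarith
qed

lemma floor_conv: "\<lfloor>real_of_int m / real n\<rfloor> = m div int n"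
  by (metis floor_divide_of_int_eq of_int_of_nat_eq)

lemma ceil_conv: "\<lceil>real_of_int m / real n\<rceil> = - ((- m) div int n)"
  unfolding ceiling_def using floor_conv[of "-m" n] by simp

lemma split1: "(N::int) > 0 \<Longrightarrow> (x - y) div N = x div N + (x mod N - y) div N"
proof -
  assume N: "N > 0"
  have e: "x - y = (x mod N - y) + (x div N) * N" using div_mult_mod_eq[of x N] by linarith
  have "(x - y) div N = ((x mod N - y) + (x div N) * N) div N" using e by metis
  also have "\<dots> = x div N + (x mod N - y) div N" by (rule div_mult_self1) (use N in simp)
  finally show ?thesis .
qed

lemma split2: "(N::int) > 0 \<Longrightarrow> (x - y) div N = - (y div N) + (x - y mod N) div N"
proof -
  assume N: "N > 0"
  have e: "x - y = (x - y mod N) + (- (y div N)) * N" using div_mult_mod_eq[of y N] by linarith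
  have "(x - y) div N = ((x - y mod N) + (- (y div N)) * N) div N" using e by metis
  also have "\<dots> = - (y div N) + (x - y mod N) div N" by (rule div_mult_self1) (use N in simp)
  finally show ?thesis .
qed


theorem lemma3p1:
  fixes a :: int and n :: nat and q :: real
  assumes "n > 0" and "odd n" and "q > 0" and "q \<noteq> 1"
    and "gcd (a * (a + 1)) (int n) > 1"
  shows "real (vec_space.rank n (matA a n q)) \<le> real n / 3
       \<and> real (vec_space.rank n (matA' a n q)) \<le> real n / 3"
proof -
  define N where "N = int n"
  have N0: "N > 0" using assms(1) unfolding N_def by simp
  have Nodd: "odd N" using assms(2) unfolding N_def by simp
  have rN: "real_of_int N = real n" unfolding N_def by simp
  have cA: "matA a n q \<in> carrier_mat n n" by (simp add: matA_def)
  have cA': "matA' a n q \<in> carrier_mat n n" by (simp add: matA'_def)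
  have eA: "matA a n q $$ (j,k) = q powr real_of_int ((a * int (j+1) - (a+1) * int (k+1)) div N)"
    if "j < n" "k < n" for j k
    unfolding N_def matA_def by (simp only: index_mat(1) that prod.case floor_conv)
  have eA': "matA' a n q $$ (j,k) = q powr real_of_int (- ((a * int (k+1) - (a+1) * int (j+1)) div N))"
    if "j < n" "k < n" for j k
  proof -
    have "matA' a n q $$ (j,k) = q powr real_of_int (- ((- ((a+1) * int (j+1) - a * int (k+1))) div N))"
      unfolding N_def matA'_def by (simp only: index_mat(1) that prod.case ceil_conv)
    also have "- ((a+1) * int (j+1) - a * int (k+1)) = a * int (k+1) - (a+1) * int (j+1)" by simp
    finally show ?thesis .
  qed
  have cases: "gcd a N > 1 \<or> gcd (a+1) N > 1"
  proof (rule ccontr)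
    assume "\<not> ?thesis"
    then have "gcd a N \<le> 1" "gcd (a+1) N \<le> 1" by auto
    moreover have "gcd a N \<noteq> 0" "gcd (a+1) N \<noteq> 0" using N0 by auto
    ultimately have "gcd a N = 1" "gcd (a+1) N = 1" using gcd_ge_0_int[of a N] gcd_ge_0_int[of "a+1" N]
      by linarith+
    then have "coprime a N" "coprime (a+1) N" by (simp_all add: coprime_iff_gcd_eq_1)
    then have "coprime (a * (a+1)) N" by simp
    then have "gcd (a * (a+1)) N = 1" by (simp add: coprime_iff_gcd_eq_1)
    then show False using assms(5) unfolding N_def by simp
  qed
  then show ?thesis
  proof
    assume g: "gcd a N > 1"
    have b: "real (card ((\<lambda>j. (a * int (j+1)) mod N) ` {0..<n})) \<le> real n / 3" (is "real (card ?C) \<le> _")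
      using bound3[OF N0 Nodd g, of n] rN by simp
    have r1: "vec_space.rank n (matA a n q) \<le> card ((\<lambda>j. (a * int (j+1)) mod N) ` {0..<n})"
    proof (rule rank_rows[OF cA, where \<phi> = "\<lambda>j. q powr real_of_int (a * int (j+1) div N)"
        and \<psi> = "\<lambda>c k. q powr real_of_int ((c - (a+1) * int (k+1)) div N)"])
      fix j k assume "j < n" "k < n"
      then show "matA a n q $$ (j,k) = q powr real_of_int (a * int (j+1) div N) *
          q powr real_of_int ((a * int (j+1) mod N - (a+1) * int (k+1)) div N)"
        unfolding eA[OF \<open>j < n\<close> \<open>k < n\<close>] split1[OF N0, of "a * int (j+1)" "(a+1) * int (k+1)"] by (simp only: of_int_add powr_add)
    qed
    have r2: "vec_space.rank n (matA' a n q) \<le> card ((\<lambda>j. (a * int (j+1)) mod N) ` {0..<n})"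
    proof (rule rank_cols[OF cA', where \<phi> = "\<lambda>k. q powr real_of_int (- (a * int (k+1) div N))"
        and \<psi> = "\<lambda>j c. q powr real_of_int (- ((c - (a+1) * int (j+1)) div N))"])
      fix j k assume "j < n" "k < n"
      then show "matA' a n q $$ (j,k) = q powr real_of_int (- ((a * int (k+1) mod N - (a+1) * int (j+1)) div N)) *
          q powr real_of_int (- (a * int (k+1) div N))"
        unfolding eA'[OF \<open>j < n\<close> \<open>k < n\<close>] split1[OF N0, of "a * int (k+1)" "(a+1) * int (j+1)"] by (simp only: of_int_add of_int_minus minus_add_distrib powr_add mult.commute)
    qed
    have "real (vec_space.rank n (matA a n q)) \<le> real (card ?C)" using r1 by (simp only: of_nat_le_iff)
    moreover have "real (vec_space.rank n (matA' a n q)) \<le> real (card ?C)" using r2 by (simp only: of_nat_le_iff)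
    ultimately show ?thesis using b by linarith
  next
    assume g: "gcd (a+1) N > 1"
    have b: "real (card ((\<lambda>j. ((a+1) * int (j+1)) mod N) ` {0..<n})) \<le> real n / 3" (is "real (card ?C) \<le> _")
      using bound3[OF N0 Nodd g, of n] rN by simp
    have r1: "vec_space.rank n (matA a n q) \<le> card ((\<lambda>j. ((a+1) * int (j+1)) mod N) ` {0..<n})"
    proof (rule rank_cols[OF cA, where \<phi> = "\<lambda>k. q powr real_of_int (- ((a+1) * int (k+1) div N))"
        and \<psi> = "\<lambda>j c. q powr real_of_int ((a * int (j+1) - c) div N)"])
      fix j k assume "j < n" "k < n"
      then show "matA a n q $$ (j,k) = q powr real_of_int ((a * int (j+1) - (a+1) * int (k+1) mod N) div N) *
          q powr real_of_int (- ((a+1) * int (k+1) div N))"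
        unfolding eA[OF \<open>j < n\<close> \<open>k < n\<close>] split2[OF N0, of "a * int (j+1)" "(a+1) * int (k+1)"] by (simp only: of_int_add powr_add mult.commute)
    qed
    have r2: "vec_space.rank n (matA' a n q) \<le> card ((\<lambda>j. ((a+1) * int (j+1)) mod N) ` {0..<n})"
    proof (rule rank_rows[OF cA', where \<phi> = "\<lambda>j. q powr real_of_int ((a+1) * int (j+1) div N)"
        and \<psi> = "\<lambda>c k. q powr real_of_int (- ((a * int (k+1) - c) div N))"])
      fix j k assume "j < n" "k < n"
      then show "matA' a n q $$ (j,k) = q powr real_of_int ((a+1) * int (j+1) div N) *
          q powr real_of_int (- ((a * int (k+1) - (a+1) * int (j+1) mod N) div N))"
        unfolding eA'[OF \<open>j < n\<close> \<open>k < n\<close>] split2[OF N0, of "a * int (k+1)" "(a+1) * int (j+1)"] by (simp only: of_int_add of_int_minus minus_add_distrib minus_minus powr_add)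
    qed
    have "real (vec_space.rank n (matA a n q)) \<le> real (card ?C)" using r1 by (simp only: of_nat_le_iff)
    moreover have "real (vec_space.rank n (matA' a n q)) \<le> real (card ?C)" using r2 by (simp only: of_nat_le_iff)
    ultimately show ?thesis using b by linarith
  qed
qed

end
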